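(* For every integer $q>2$, $\mathrm{Inn}(Q_2(T_{2,q}\cup A))\cong D_{2q/\gcd(2,q)}$ and $\mathrm{Trans}(Q_2(T_{2,q}\cup A))\cong D_q$.
   Context: A quandle is a set $Q$ with binary operations $\rhd$, $\rhd^{-1}$ satisfying $x\rhd x=x$, $(x\rhd y)\rhd^{-1}y=x=(x\rhd^{-1}y)\rhd y$, and $(x\rhd y)\rhd z=(x\rhd z)\rhd(y\rhd z)$; write $x^y=x\rhd y$. For $x\in Q$ the point symmetry $S_x:Q\to Q$ is $S_x(y)=y\rhd x$. $\mathrm{Inn}(Q)$ is the subgroup of the automorphism group generated by all $S_x$, and $\mathrm{Trans}(Q)$ is the subgroup generated by all products $S_xS_y^{-1}$. A quandle is involutory if $(x^y)^y=x$ for all $x,y$. The fundamental quandle of a link is presented from a diagram by one generator per arc and a relation $x_i=x_k^{x_j}$ at each crossing (over-arc $x_j$); the involutory quandle $Q_2(L)$ is its quotient by the relations $x^{yy}=x$ for all pairs of generators, and it is independent of orientation. $T_{2,q}$ is the $(2,q)$ torus link (two strands with $q$ right-handed half twists) lying on an unknotted torus $F\subset S^3$; $T_{2,q}\cup A$ is obtained by adjoining an axis $A$, the core of the solid torus bounded by $F$ around which $T_{2,q}$ winds twice, so that $A$ has linking number $2$ with $T_{2,q}$. $D_m$ denotes the dihedral group of order $2m$. *)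

theory Defs
  imports "HOL-Algebra.Algebra"
begin

text \<open>Terms in the quandle signature: generators, the operation x \<rhd> y (Rt x y)
  and its inverse x \<rhd>^-1 y (RtInv x y).\<close>

datatype 'g qterm = Gen 'g | Rt "'g qterm" "'g qterm" | RtInv "'g qterm" "'g qterm"

fun qgens :: "'g qterm \<Rightarrow> 'g set" where
  "qgens (Gen g) = {g}"
| "qgens (Rt x y) = qgens x \<union> qgens y"
| "qgens (RtInv x y) = qgens x \<union> qgens y"

definition qterms :: "'g set \<Rightarrow> 'g qterm set" where
  "qterms G = {t. qgens t \<subseteq> G}"

inductive qcong :: "'g set \<Rightarrow> ('g qterm \<times> 'g qterm) set \<Rightarrow> 'g qterm \<Rightarrow> 'g qterm \<Rightarrow> bool"
  for G R where
  refl: "t \<in> qterms G \<Longrightarrow> qcong G R t t"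
| sym: "qcong G R s t \<Longrightarrow> qcong G R t s"
| trans: "qcong G R s t \<Longrightarrow> qcong G R t u \<Longrightarrow> qcong G R s u"
| rel: "(s, t) \<in> R \<Longrightarrow> s \<in> qterms G \<Longrightarrow> t \<in> qterms G \<Longrightarrow> qcong G R s t"
| idem: "x \<in> qterms G \<Longrightarrow> qcong G R (Rt x x) x"
| inv1: "x \<in> qterms G \<Longrightarrow> y \<in> qterms G \<Longrightarrow> qcong G R (RtInv (Rt x y) y) x"
| inv2: "x \<in> qterms G \<Longrightarrow> y \<in> qterms G \<Longrightarrow> qcong G R (Rt (RtInv x y) y) x"
| dist: "x \<in> qterms G \<Longrightarrow> y \<in> qterms G \<Longrightarrow> z \<in> qterms G \<Longrightarrow>
          qcong G R (Rt (Rt x y) z) (Rt (Rt x z) (Rt y z))"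
| cong_Rt: "qcong G R x x' \<Longrightarrow> qcong G R y y' \<Longrightarrow> qcong G R (Rt x y) (Rt x' y')"
| cong_RtInv: "qcong G R x x' \<Longrightarrow> qcong G R y y' \<Longrightarrow> qcong G R (RtInv x y) (RtInv x' y')"

definition qclass :: "'g set \<Rightarrow> ('g qterm \<times> 'g qterm) set \<Rightarrow> 'g qterm \<Rightarrow> 'g qterm set" where
  "qclass G R t = {s. qcong G R t s}"

definition pres_carrier :: "'g set \<Rightarrow> ('g qterm \<times> 'g qterm) set \<Rightarrow> 'g qterm set set" where
  "pres_carrier G R = qclass G R ` qterms G"

definition pres_op :: "'g set \<Rightarrow> ('g qterm \<times> 'g qterm) set \<Rightarrow> 'g qterm set \<Rightarrow> 'g qterm set \<Rightarrow> 'g qterm set" where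
  "pres_op G R U V = qclass G R (Rt (SOME s. s \<in> U) (SOME t. t \<in> V))"

definition invol_rels :: "'g set \<Rightarrow> ('g qterm \<times> 'g qterm) set" where
  "invol_rels G = {(Rt (Rt (Gen x) (Gen y)) (Gen y), Gen x) | x y. x \<in> G \<and> y \<in> G}"

definition point_sym :: "'a set \<Rightarrow> ('a \<Rightarrow> 'a \<Rightarrow> 'a) \<Rightarrow> 'a \<Rightarrow> ('a \<Rightarrow> 'a)" where
  "point_sym Q op x = (\<lambda>y\<in>Q. op y x)"

definition Inn_group :: "'a set \<Rightarrow> ('a \<Rightarrow> 'a \<Rightarrow> 'a) \<Rightarrow> ('a \<Rightarrow> 'a) monoid" where
  "Inn_group Q op = (BijGroup Q)\<lparr>carrier := generate (BijGroup Q) (point_sym Q op ` Q)\<rparr>"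

definition Trans_group :: "'a set \<Rightarrow> ('a \<Rightarrow> 'a \<Rightarrow> 'a) \<Rightarrow> ('a \<Rightarrow> 'a) monoid" where
  "Trans_group Q op = (BijGroup Q)\<lparr>carrier := generate (BijGroup Q)
     {point_sym Q op x \<otimes>\<^bsub>BijGroup Q\<^esub> inv\<^bsub>BijGroup Q\<^esub> (point_sym Q op y) | x y. x \<in> Q \<and> y \<in> Q}\<rparr>"

section \<open>Dihedral group D_m of order 2m: (a,s) stands for r^a f^s\<close>

definition dihedral_group :: "nat \<Rightarrow> (int \<times> bool) monoid" where
  "dihedral_group m = \<lparr>carrier = {0..<int m} \<times> UNIV,
     monoid.mult = (\<lambda>(a, s) (b, t). ((if s then a - b else a + b) mod int m, s \<noteq> t)),
     monoid.one = (0, False)\<rparr>"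

text \<open>Diagram: closed 2-braid sigma_1^q with the braid axis A drawn as a belt around the
  two strands (upper edge of the belt under both strands, lower edge over both).
  Arcs of T: a_0, ..., a_{q+1}; arcs of A: c_0, c_1.\<close>

datatype arc = ArcT nat | ArcA nat

definition TA_gens :: "nat \<Rightarrow> arc set" where
  "TA_gens q = {ArcT k | k. k \<le> q + 1} \<union> {ArcA 0, ArcA 1}"

definition TA_rels :: "nat \<Rightarrow> (arc qterm \<times> arc qterm) set" where
  "TA_rels q =
     {(Gen (ArcT (k + 1)), Rt (Gen (ArcT (k - 1))) (Gen (ArcT k))) | k. 1 \<le> k \<and> k \<le> q}
   \<union> {(Gen (ArcA 1), Rt (Gen (ArcA 0)) (Gen (ArcT (q + 1)))),
      (Gen (ArcA 0), Rt (Gen (ArcA 1)) (Gen (ArcT q))),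
      (Gen (ArcT 1), Rt (Gen (ArcT (q + 1))) (Gen (ArcA 0))),
      (Gen (ArcT 0), Rt (Gen (ArcT q)) (Gen (ArcA 0)))}"

definition Q2_TA_carrier :: "nat \<Rightarrow> arc qterm set set" where
  "Q2_TA_carrier q = pres_carrier (TA_gens q) (TA_rels q \<union> invol_rels (TA_gens q))"

definition Q2_TA_op :: "nat \<Rightarrow> arc qterm set \<Rightarrow> arc qterm set \<Rightarrow> arc qterm set" where
  "Q2_TA_op q = pres_op (TA_gens q) (TA_rels q \<union> invol_rels (TA_gens q))"

end

theory Submission
  imports Defs
begin


datatype mel = MT int | MA bool

definition Mset :: "nat \<Rightarrow> mel set" where
  "Mset q = MT ` {0..<2 * int q} \<union> range MA"

definition psi :: "nat \<Rightarrow> int \<times> bool \<Rightarrow> mel \<Rightarrow> mel" where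
  "psi q d x = (case x of MT j \<Rightarrow> MT ((if snd d then fst d - j else fst d + j) mod (2 * int q))
                        | MA b \<Rightarrow> MA (b \<noteq> snd d))"

definition gM :: "nat \<Rightarrow> mel \<Rightarrow> int \<times> bool" where
  "gM q y = (case y of MT k \<Rightarrow> (2 * k, True) | MA b \<Rightarrow> (int q, False))"

definition opM :: "nat \<Rightarrow> mel \<Rightarrow> mel \<Rightarrow> mel" where
  "opM q x y = psi q (gM q y) x"

definition dmul :: "int \<times> bool \<Rightarrow> int \<times> bool \<Rightarrow> int \<times> bool" where
  "dmul d1 d2 = (if snd d1 then fst d1 - fst d2 else fst d1 + fst d2, snd d1 \<noteq> snd d2)"

definition dinv :: "int \<times> bool \<Rightarrow> int \<times> bool" where
  "dinv d = (if snd d then fst d else - fst d, snd d)"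

lemma psi_dmul: "psi q (dmul d1 d2) x = psi q d1 (psi q d2 x)"
  by (cases x; cases d1; cases d2) (auto simp: psi_def dmul_def mod_simps algebra_simps)

lemma psi_cong: "fst d mod (2 * int q) = fst d' mod (2 * int q) \<Longrightarrow> snd d = snd d' \<Longrightarrow> psi q d = psi q d'"
  apply (rule ext)
  subgoal for x
    by (cases x; cases d; cases d') (auto simp: psi_def mod_simps,
        metis mod_diff_left_eq, metis mod_add_left_eq)
  done

lemma psi_id: "q > 0 \<Longrightarrow> x \<in> Mset q \<Longrightarrow> psi q (0, False) x = x"
  by (auto simp: Mset_def psi_def)

lemma psi_Mset: "q > 0 \<Longrightarrow> psi q d x \<in> Mset q"
  by (cases x) (auto simp: Mset_def psi_def)

lemma opM_Mset: "q > 0 \<Longrightarrow> opM q x y \<in> Mset q"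
  by (simp add: opM_def psi_Mset)

lemma dmul_dinv: "psi q (dmul d (dinv d)) = psi q (0, False)"
  by (rule psi_cong) (auto simp: dmul_def dinv_def)

lemma dinv_dmul: "psi q (dmul (dinv d) d) = psi q (0, False)"
  by (rule psi_cong) (auto simp: dmul_def dinv_def)

lemma opM_idem: "q > 0 \<Longrightarrow> x \<in> Mset q \<Longrightarrow> opM q x x = x"
  by (auto simp: Mset_def opM_def psi_def gM_def)

lemma gM_sq: "psi q (dmul (gM q y) (gM q y)) = psi q (0, False)"
  by (rule psi_cong) (auto simp: dmul_def gM_def split: mel.splits)

lemma opM_invol: "q > 0 \<Longrightarrow> x \<in> Mset q \<Longrightarrow> opM q (opM q x y) y = x"
  by (simp add: opM_def psi_dmul[symmetric] gM_sq psi_id)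

lemma gM_conj: "psi q (dmul (gM q (psi q h y)) h) = psi q (dmul h (gM q y))"
proof (rule psi_cong)
  obtain a s where h: "h = (a, s)" by (cases h)
  show "fst (dmul (gM q (psi q h y)) h) mod (2 * int q) = fst (dmul h (gM q y)) mod (2 * int q)"
  proof (cases y)
    case (MT k)
    have "(2 * ((a - k) mod (2 * int q)) - a) mod (2 * int q) = (2 * (a - k) - a) mod (2 * int q)"
      by (metis mod_diff_left_eq mod_mult_right_eq)
    moreover have "(2 * ((a + k) mod (2 * int q)) - a) mod (2 * int q) = (2 * (a + k) - a) mod (2 * int q)"
      by (metis mod_diff_left_eq mod_mult_right_eq)
    ultimately show ?thesis using MT h by (auto simp: dmul_def gM_def psi_def algebra_simps)
  next
    case (MA b)
    have "(a - int q) mod (2 * int q) = (a + int q) mod (2 * int q)"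
    proof -
      have "a + int q = (a - int q) + 1 * (2 * int q)" by simp
      then show ?thesis by (metis mod_mult_self1)
    qed
    then show ?thesis using MA h by (auto simp: dmul_def gM_def psi_def algebra_simps)
  qed
  show "snd (dmul (gM q (psi q h y)) h) = snd (dmul h (gM q y))"
    by (cases y) (auto simp: dmul_def gM_def psi_def)
qed

lemma opM_dist: "q > 0 \<Longrightarrow> opM q (opM q x y) z = opM q (opM q x z) (opM q y z)"
  by (simp add: opM_def psi_dmul[symmetric] gM_conj)


lemma iso_set_sym':
  assumes "h \<in> iso G H" and cl: "\<And>a b. a \<in> carrier G \<Longrightarrow> b \<in> carrier G \<Longrightarrow> a \<otimes>\<^bsub>G\<^esub> b \<in> carrier G"
  shows "inv_into (carrier G) h \<in> iso H G"
proof -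
  have h: "h \<in> hom G H" "bij_betw h (carrier G) (carrier H)"
    using assms by (auto simp add: iso_def bij_betw_inv_into)
  then have HG: "bij_betw (inv_into (carrier G) h) (carrier H) (carrier G)"
    by (simp add: bij_betw_inv_into)
  have "inv_into (carrier G) h \<in> hom H G"
    unfolding hom_def
  proof safe
    show *: "\<And>x. x \<in> carrier H \<Longrightarrow> inv_into (carrier G) h x \<in> carrier G"
      by (meson HG bij_betwE)
    show "inv_into (carrier G) h (x \<otimes>\<^bsub>H\<^esub> y) = inv_into (carrier G) h x \<otimes>\<^bsub>G\<^esub> inv_into (carrier G) h y"
      if "x \<in> carrier H" "y \<in> carrier H" for x y
    proof (rule inv_into_f_eq)
      show "inj_on h (carrier G)"
        using bij_betw_def h(2) by blast
      show "inv_into (carrier G) h x \<otimes>\<^bsub>G\<^esub> inv_into (carrier G) h y \<in> carrier G"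
        using * that cl by blast
      show "h (inv_into (carrier G) h x \<otimes>\<^bsub>G\<^esub> inv_into (carrier G) h y) = x \<otimes>\<^bsub>H\<^esub> y"
        using h bij_betw_inv_into_right [of h] unfolding hom_def by (simp add: "*" that)
    qed
  qed
  then show ?thesis
    by (simp add: Group.iso_def bij_betw_inv_into h)
qed

lemma iso_sym': "G \<cong> H \<Longrightarrow> (\<And>a b. a \<in> carrier G \<Longrightarrow> b \<in> carrier G \<Longrightarrow> a \<otimes>\<^bsub>G\<^esub> b \<in> carrier G) \<Longrightarrow> H \<cong> G"
  using iso_set_sym' unfolding is_iso_def by blast


lemma dih_carrier: "carrier (dihedral_group m) = {0..<int m} \<times> UNIV"
  by (simp add: dihedral_group_def)

lemma dih_mult: "(a, s) \<otimes>\<^bsub>dihedral_group m\<^esub> (b, t) = ((if s then a - b else a + b) mod int m, s \<noteq> t)"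
  by (simp add: dihedral_group_def)

lemma dih_closed: "m > 0 \<Longrightarrow> x \<in> carrier (dihedral_group m) \<Longrightarrow> y \<in> carrier (dihedral_group m)
   \<Longrightarrow> x \<otimes>\<^bsub>dihedral_group m\<^esub> y \<in> carrier (dihedral_group m)"
  by (cases x; cases y) (auto simp: dih_carrier dih_mult)

definition P2 :: "nat \<Rightarrow> (int \<times> bool) set" where
  "P2 q = {d. even (fst d - (if snd d then int q else 0))}"

definition emb2 :: "nat \<Rightarrow> int \<times> bool \<Rightarrow> int \<times> bool" where
  "emb2 q d = (2 * fst d + (if snd d then int q else 0), snd d)"

context
  fixes q :: nat and Q :: "'a set" and op :: "'a \<Rightarrow> 'a \<Rightarrow> 'a" and e :: "'a \<Rightarrow> mel" and c :: "mel \<Rightarrow> 'a"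
  assumes q2: "q > 2"
    and e_in: "\<And>U. U \<in> Q \<Longrightarrow> e U \<in> Mset q"
    and c_in: "\<And>m. m \<in> Mset q \<Longrightarrow> c m \<in> Q"
    and ce: "\<And>U. U \<in> Q \<Longrightarrow> c (e U) = U"
    and ec: "\<And>m. m \<in> Mset q \<Longrightarrow> e (c m) = m"
    and op_eq: "\<And>U V. U \<in> Q \<Longrightarrow> V \<in> Q \<Longrightarrow> op U V = c (opM q (e U) (e V))"
begin

definition Psi :: "int \<times> bool \<Rightarrow> 'a \<Rightarrow> 'a" where
  "Psi d = (\<lambda>U\<in>Q. c (psi q d (e U)))"

lemma q0: "q > 0" using q2 by simp

lemma Psi_in: "Psi d \<in> Bij Q"
proof -
  have "bij_betw (Psi d) Q Q"
  proof (rule bij_betwI[where g = "Psi (dinv d)"])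
    show "Psi d \<in> Q \<rightarrow> Q" "Psi (dinv d) \<in> Q \<rightarrow> Q"
      by (auto simp: Psi_def intro!: c_in psi_Mset q0)
    show "Psi (dinv d) (Psi d x) = x" if "x \<in> Q" for x
    proof -
      have "Psi (dinv d) (Psi d x) = c (psi q (dinv d) (psi q d (e x)))"
        using that by (simp add: Psi_def c_in psi_Mset q0 ec)
      also have "\<dots> = c (e x)"
        by (simp add: psi_dmul[symmetric] dinv_dmul psi_id q0 e_in that)
      finally show ?thesis using ce that by simp
    qed
    show "Psi d (Psi (dinv d) x) = x" if "x \<in> Q" for x
    proof -
      have "Psi d (Psi (dinv d) x) = c (psi q d (psi q (dinv d) (e x)))"
        using that by (simp add: Psi_def c_in psi_Mset q0 ec)
      also have "\<dots> = c (e x)"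
        by (simp add: psi_dmul[symmetric] dmul_dinv psi_id q0 e_in that)
      finally show ?thesis using ce that by simp
    qed
  qed
  then show ?thesis by (simp add: Bij_def Psi_def)
qed

lemma Psi_mult: "Psi d1 \<otimes>\<^bsub>BijGroup Q\<^esub> Psi d2 = Psi (dmul d1 d2)"
  using Psi_in[of d1] Psi_in[of d2]
  by (auto simp: BijGroup_def compose_def Psi_def psi_dmul c_in psi_Mset q0 ec intro!: ext)

lemma Psi_one: "Psi (0, False) = \<one>\<^bsub>BijGroup Q\<^esub>"
  by (auto simp: BijGroup_def Psi_def psi_id q0 e_in ce intro!: ext)

lemma Psi_cong: "fst d mod (2 * int q) = fst d' mod (2 * int q) \<Longrightarrow> snd d = snd d' \<Longrightarrow> Psi d = Psi d'"
  unfolding Psi_def using psi_cong[of d q d'] by simp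

lemma Psi_inv: "inv\<^bsub>BijGroup Q\<^esub> (Psi d) = Psi (dinv d)"
proof -
  have "Psi (dinv d) \<otimes>\<^bsub>BijGroup Q\<^esub> Psi d = \<one>\<^bsub>BijGroup Q\<^esub>"
    by (simp add: Psi_mult Psi_one[symmetric]) (simp add: Psi_def dinv_dmul)
  then show ?thesis
    using group.inv_equality[OF group_BijGroup] Psi_in by (metis BijGroup_def partial_object.select_convs(1))
qed

lemma point_sym_eq: "U \<in> Q \<Longrightarrow> point_sym Q op U = Psi (gM q (e U))"
  by (auto simp: point_sym_def Psi_def op_eq opM_def intro!: ext)

lemma Psi_inj:
  assumes "Psi d1 = Psi d2"
  shows "fst d1 mod (2 * int q) = fst d2 mod (2 * int q) \<and> snd d1 = snd d2"
proof -
  have m0: "MT 0 \<in> Mset q" "MA False \<in> Mset q" using q0 by (auto simp: Mset_def)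
  have inj: "inj_on c (Mset q)" by (metis ec inj_onI)
  have "c (psi q d1 (MT 0)) = c (psi q d2 (MT 0))"
  proof -
    have "Psi d1 (c (MT 0)) = Psi d2 (c (MT 0))" using assms by simp
    then show ?thesis using c_in[OF m0(1)] ec[OF m0(1)] by (simp add: Psi_def)
  qed
  then have 1: "psi q d1 (MT 0) = psi q d2 (MT 0)"
    using inj_onD[OF inj] psi_Mset q0 by blast
  have "c (psi q d1 (MA False)) = c (psi q d2 (MA False))"
  proof -
    have "Psi d1 (c (MA False)) = Psi d2 (c (MA False))" using assms by simp
    then show ?thesis using c_in[OF m0(2)] ec[OF m0(2)] by (simp add: Psi_def)
  qed
  then have 2: "psi q d1 (MA False) = psi q d2 (MA False)"
    using inj_onD[OF inj] psi_Mset q0 by blast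
  from 1 2 show ?thesis by (simp add: psi_def split: if_splits)
qed

lemma Psi_subgroup:
  assumes "(0, False) \<in> P" "\<And>x y. x \<in> P \<Longrightarrow> y \<in> P \<Longrightarrow> dmul x y \<in> P" "\<And>x. x \<in> P \<Longrightarrow> dinv x \<in> P"
  shows "subgroup (Psi ` P) (BijGroup Q)"
proof (rule subgroup.intro)
  show "Psi ` P \<subseteq> carrier (BijGroup Q)" using Psi_in by (auto simp: BijGroup_def)
  show "x \<otimes>\<^bsub>BijGroup Q\<^esub> y \<in> Psi ` P" if "x \<in> Psi ` P" "y \<in> Psi ` P" for x y
    using that assms(2) by (auto simp: Psi_mult)
  show "\<one>\<^bsub>BijGroup Q\<^esub> \<in> Psi ` P" using assms(1) Psi_one by (metis image_eqI)
  show "inv\<^bsub>BijGroup Q\<^esub> x \<in> Psi ` P" if "x \<in> Psi ` P" for x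
    using that assms(3) by (auto simp: Psi_inv)
qed

lemma P2_sub: "subgroup (Psi ` P2 q) (BijGroup Q)"
  by (rule Psi_subgroup) (auto simp: P2_def dmul_def dinv_def)

lemma UNIV_sub: "subgroup (Psi ` UNIV) (BijGroup Q)"
  by (rule Psi_subgroup) auto

lemma gen_T: "Psi (2 * x, True) \<in> point_sym Q op ` Q"
proof -
  let ?m = "MT (x mod (2 * int q))"
  have m: "?m \<in> Mset q" using q0 by (auto simp: Mset_def)
  have "point_sym Q op (c ?m) = Psi (2 * (x mod (2 * int q)), True)"
    using point_sym_eq[OF c_in[OF m]] ec[OF m] by (simp add: gM_def)
  also have "\<dots> = Psi (2 * x, True)"
    by (rule Psi_cong) (simp_all add: mod_mult_right_eq)
  finally show ?thesis using c_in[OF m] by (metis image_eqI)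
qed

lemma gen_A: "Psi (int q, False) \<in> point_sym Q op ` Q"
proof -
  have m: "MA False \<in> Mset q" by (auto simp: Mset_def)
  have "point_sym Q op (c (MA False)) = Psi (int q, False)"
    using point_sym_eq[OF c_in[OF m]] ec[OF m] by (simp add: gM_def)
  then show ?thesis using c_in[OF m] by (metis image_eqI)
qed


lemma Psi_in_gen: "d \<in> S \<Longrightarrow> Psi d \<in> generate (BijGroup Q) (Psi ` S)"
  by (rule generate.incl) auto

lemma gen_inn_odd:
  assumes "odd q"
  shows "generate (BijGroup Q) (point_sym Q op ` Q) = Psi ` UNIV"
proof
  show "generate (BijGroup Q) (point_sym Q op ` Q) \<subseteq> Psi ` UNIV"
    by (rule group.generate_subgroup_incl[OF group_BijGroup _ UNIV_sub]) (auto simp: point_sym_eq)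
  show "Psi ` UNIV \<subseteq> generate (BijGroup Q) (point_sym Q op ` Q)"
  proof
    fix f assume "f \<in> Psi ` UNIV"
    then obtain x s where f: "f = Psi (x, s)" by auto
    let ?G = "generate (BijGroup Q) (point_sym Q op ` Q)"
    have T: "Psi (2 * k, True) \<in> ?G" for k using gen_T by (rule generate.incl)
    have A: "Psi (int q, False) \<in> ?G" using gen_A by (rule generate.incl)
    have M: "Psi d1 \<in> ?G \<Longrightarrow> Psi d2 \<in> ?G \<Longrightarrow> Psi (dmul d1 d2) \<in> ?G" for d1 d2
      using generate.eng[of "Psi d1" _ _ "Psi d2"] Psi_mult by metis
    have T0: "Psi (2 * k, False) \<in> ?G" for k
      using M[OF T[of k] T[of 0]] by (simp add: dmul_def)
    show "f \<in> ?G"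
    proof (cases "even x")
      case True
      then obtain k where x: "x = 2 * k" by blast
      show ?thesis using T[of k] T0[of k] f x by (cases s) simp_all
    next
      case False
      then have "even (x + int q)" "even (x - int q)" using assms by simp_all
      then obtain k l where k: "x + int q = 2 * k" and l: "x - int q = 2 * l" by (elim evenE)
      have 1: "dmul (2 * k, True) (int q, False) = (x, True)" using k by (simp add: dmul_def)
      have 2: "dmul (2 * l, False) (int q, False) = (x, False)" using l by (simp add: dmul_def)
      show ?thesis using M[OF T A, of k] M[OF T0 A, of l] 1 2 f by (cases s) simp_all
    qed
  qed
qed

lemma gM_P2: "even q \<Longrightarrow> gM q m \<in> P2 q"
  by (cases m) (auto simp: gM_def P2_def)

lemma gen_inn_even:
  assumes "even q"
  shows "generate (BijGroup Q) (point_sym Q op ` Q) = Psi ` P2 q"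
proof
  show "generate (BijGroup Q) (point_sym Q op ` Q) \<subseteq> Psi ` P2 q"
    by (rule group.generate_subgroup_incl[OF group_BijGroup _ P2_sub])
      (auto simp: point_sym_eq gM_P2 assms)
  show "Psi ` P2 q \<subseteq> generate (BijGroup Q) (point_sym Q op ` Q)"
  proof
    fix f assume "f \<in> Psi ` P2 q"
    then obtain x s where f: "f = Psi (x, s)" and P: "(x, s) \<in> P2 q" by auto
    let ?G = "generate (BijGroup Q) (point_sym Q op ` Q)"
    have T: "Psi (2 * k, True) \<in> ?G" for k using gen_T by (rule generate.incl)
    have M: "Psi d1 \<in> ?G \<Longrightarrow> Psi d2 \<in> ?G \<Longrightarrow> Psi (dmul d1 d2) \<in> ?G" for d1 d2
      using generate.eng[of "Psi d1" _ _ "Psi d2"] Psi_mult by metis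
    have T0: "Psi (2 * k, False) \<in> ?G" for k
      using M[OF T[of k] T[of 0]] by (simp add: dmul_def)
    have ev: "even (x - (if s then int q else 0))" using P by (simp add: P2_def)
    have "even x"
    proof (cases s)
      case True
      then have "even (x - int q)" using ev by simp
      moreover have "even (int q)" using assms by simp
      ultimately have "even ((x - int q) + int q)" by (subst even_add) simp
      then show ?thesis by simp
    next
      case False then show ?thesis using ev by simp
    qed
    then obtain k where x: "x = 2 * k" by (elim evenE)
    show "f \<in> ?G" using T[of k] T0[of k] f x by (cases s) simp_all
  qed
qed

lemma gen_trans:
  "generate (BijGroup Q) {point_sym Q op x \<otimes>\<^bsub>BijGroup Q\<^esub> inv\<^bsub>BijGroup Q\<^esub> (point_sym Q op y) | x y. x \<in> Q \<and> y \<in> Q}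
    = Psi ` P2 q" (is "generate _ ?S = _")
proof
  have eq: "x \<in> Q \<Longrightarrow> y \<in> Q \<Longrightarrow> point_sym Q op x \<otimes>\<^bsub>BijGroup Q\<^esub> inv\<^bsub>BijGroup Q\<^esub> (point_sym Q op y)
     = Psi (dmul (gM q (e x)) (dinv (gM q (e y))))" for x y
    by (simp add: point_sym_eq Psi_inv Psi_mult)
  have inP2: "dmul (gM q m1) (dinv (gM q m2)) \<in> P2 q" for m1 m2
    by (cases m1; cases m2) (simp_all add: gM_def dmul_def dinv_def P2_def)
  show "generate (BijGroup Q) ?S \<subseteq> Psi ` P2 q"
  proof (rule group.generate_subgroup_incl[OF group_BijGroup _ P2_sub])
    show "?S \<subseteq> Psi ` P2 q"
    proof
      fix f assume "f \<in> ?S"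
      then obtain x y where xy: "x \<in> Q" "y \<in> Q" "f = point_sym Q op x \<otimes>\<^bsub>BijGroup Q\<^esub> inv\<^bsub>BijGroup Q\<^esub> (point_sym Q op y)" by blast
      then have "f = Psi (dmul (gM q (e x)) (dinv (gM q (e y))))" using eq[OF xy(1,2)] by simp
      then show "f \<in> Psi ` P2 q" by (rule image_eqI) (rule inP2)
    qed
  qed
  show "Psi ` P2 q \<subseteq> generate (BijGroup Q) ?S"
  proof
    fix f assume "f \<in> Psi ` P2 q"
    then obtain x s where f: "f = Psi (x, s)" and P: "(x, s) \<in> P2 q" by auto
    have mem: "MT (k mod (2 * int q)) \<in> Mset q" "MA False \<in> Mset q" for k
      using q0 by (auto simp: Mset_def)
    have gen: "Psi (dmul (gM q m1) (dinv (gM q m2))) \<in> generate (BijGroup Q) ?S"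
      if "m1 \<in> Mset q" "m2 \<in> Mset q" for m1 m2
    proof (rule generate.incl)
      have "Psi (dmul (gM q m1) (dinv (gM q m2))) = point_sym Q op (c m1) \<otimes>\<^bsub>BijGroup Q\<^esub> inv\<^bsub>BijGroup Q\<^esub> (point_sym Q op (c m2))"
        using eq[OF c_in[OF that(1)] c_in[OF that(2)]] ec that by simp
      moreover have "c m1 \<in> Q" "c m2 \<in> Q" using c_in that by simp_all
      ultimately show "Psi (dmul (gM q m1) (dinv (gM q m2))) \<in> ?S"
        by (intro CollectI exI[of _ "c m1"] exI[of _ "c m2"] conjI)
    qed
    have cg: "Psi (2 * (k mod (2 * int q)) + z, t) = Psi (2 * k + z, t)" for k z t
    proof (rule Psi_cong)
      have "(2 * (k mod (2 * int q)) + z) mod (2 * int q) = ((2 * (k mod (2 * int q))) mod (2 * int q) + z) mod (2 * int q)"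
        by (rule mod_add_left_eq[symmetric])
      also have "(2 * (k mod (2 * int q))) mod (2 * int q) = (2 * k) mod (2 * int q)"
        by (rule mod_mult_right_eq)
      also have "((2 * k) mod (2 * int q) + z) mod (2 * int q) = (2 * k + z) mod (2 * int q)"
        by (rule mod_add_left_eq)
      finally show "fst (2 * (k mod (2 * int q)) + z, t) mod (2 * int q) = fst (2 * k + z, t) mod (2 * int q)" by simp
    qed simp
    show "f \<in> generate (BijGroup Q) ?S"
    proof (cases s)
      case True
      then have "even (x - int q)" using P by (simp add: P2_def)
      then obtain k where "x - int q = 2 * k" by (elim evenE)
      then have k: "x = 2 * k + int q" by simp
      have "Psi (dmul (gM q (MT (k mod (2 * int q)))) (dinv (gM q (MA False)))) = Psi (x, True)"
        using cg[of k "int q" True] k by (simp add: gM_def dmul_def dinv_def)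
      then have "Psi (x, True) \<in> generate (BijGroup Q) ?S" using gen[OF mem(1)[of k] mem(2)] by simp
      then show ?thesis using f True by simp
    next
      case False
      then have "even x" using P by (simp add: P2_def)
      then obtain k where k: "x = 2 * k" by (elim evenE)
      have m0: "MT 0 \<in> Mset q" using q0 by (auto simp: Mset_def)
      have "Psi (dmul (gM q (MT (k mod (2 * int q)))) (dinv (gM q (MT 0)))) = Psi (x, False)"
        using cg[of k 0 False] k by (simp add: gM_def dmul_def dinv_def)
      then have "Psi (x, False) \<in> generate (BijGroup Q) ?S" using gen[OF mem(1)[of k] m0] by simp
      then show ?thesis using f False by simp
    qed
  qed
qed

lemma iso_gen:
  assumes hom: "\<And>d1 d2. d1 \<in> carrier D \<Longrightarrow> d2 \<in> carrier D \<Longrightarrow>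
       Psi (emb (d1 \<otimes>\<^bsub>D\<^esub> d2)) = Psi (dmul (emb d1) (emb d2))"
    and inj: "inj_on (\<lambda>d. Psi (emb d)) (carrier D)"
    and img: "(\<lambda>d. Psi (emb d)) ` carrier D = S"
    and cl: "\<And>a b. a \<in> carrier D \<Longrightarrow> b \<in> carrier D \<Longrightarrow> a \<otimes>\<^bsub>D\<^esub> b \<in> carrier D"
  shows "BijGroup Q\<lparr>carrier := S\<rparr> \<cong> D"
proof (rule iso_sym')
  have "(\<lambda>d. Psi (emb d)) \<in> iso D (BijGroup Q\<lparr>carrier := S\<rparr>)"
  proof (rule isoI)
    show "(\<lambda>d. Psi (emb d)) \<in> hom D (BijGroup Q\<lparr>carrier := S\<rparr>)"
      unfolding hom_def using img hom cl by (auto simp: Psi_mult)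
    show "bij_betw (\<lambda>d. Psi (emb d)) (carrier D) (carrier (BijGroup Q\<lparr>carrier := S\<rparr>))"
      using inj img by (simp add: bij_betw_def)
  qed
  then show "D \<cong> BijGroup Q\<lparr>carrier := S\<rparr>" by (rule is_isoI)
  show "a \<otimes>\<^bsub>D\<^esub> b \<in> carrier D" if "a \<in> carrier D" "b \<in> carrier D" for a b using cl that .
qed

lemma two_mod: "(2 * (y mod int q)) mod (2 * int q) = (2 * y) mod (2 * int q)"
  by (simp add: mod_mult_mult1)

lemma two_mod': "2 * (y mod int q) = (2 * y) mod (2 * int q)"
  by (simp add: mod_mult_mult1)

lemma iso_odd:
  assumes "odd q"
  shows "Inn_group Q op \<cong> dihedral_group (2 * q)"
  unfolding Inn_group_def gen_inn_odd[OF assms]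
proof (rule iso_gen[where emb = id])
  show "Psi (id (d1 \<otimes>\<^bsub>dihedral_group (2 * q)\<^esub> d2)) = Psi (dmul (id d1) (id d2))" for d1 d2
    by (cases d1; cases d2) (auto simp: dih_mult dmul_def intro!: Psi_cong)
  show "inj_on (\<lambda>d. Psi (id d)) (carrier (dihedral_group (2 * q)))"
  proof (rule inj_onI)
    fix d1 d2 assume d: "d1 \<in> carrier (dihedral_group (2 * q))" "d2 \<in> carrier (dihedral_group (2 * q))"
      "Psi (id d1) = Psi (id d2)"
    then show "d1 = d2" using Psi_inj[of d1 d2]
      by (cases d1; cases d2) (auto simp: dih_carrier)
  qed
  show "(\<lambda>d. Psi (id d)) ` carrier (dihedral_group (2 * q)) = Psi ` UNIV"
  proof safe
    fix x s
    have "(x mod (2 * int q), s) \<in> carrier (dihedral_group (2 * q))"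
      using q0 by (auto simp: dih_carrier)
    moreover have "Psi (x, s) = Psi (id (x mod (2 * int q), s))" by (auto intro!: Psi_cong)
    ultimately show "Psi (x, s) \<in> (\<lambda>d. Psi (id d)) ` carrier (dihedral_group (2 * q))" by blast
  qed auto
  show "a \<otimes>\<^bsub>dihedral_group (2 * q)\<^esub> b \<in> carrier (dihedral_group (2 * q))"
    if "a \<in> carrier (dihedral_group (2 * q))" "b \<in> carrier (dihedral_group (2 * q))" for a b
    using dih_closed that q0 by simp
qed

lemma two_mod_add: "(2 * (x mod int q) + z) mod (2 * int q) = (2 * x + z) mod (2 * int q)"
proof -
  have "(2 * (x mod int q) + z) mod (2 * int q) = ((2 * x) mod (2 * int q) + z) mod (2 * int q)"
    by (simp only: two_mod')
  also have "\<dots> = (2 * x + z) mod (2 * int q)" by (rule mod_add_left_eq)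
  finally show ?thesis .
qed

lemma iso_P2:
  assumes "S = Psi ` P2 q"
  shows "BijGroup Q\<lparr>carrier := S\<rparr> \<cong> dihedral_group q"
  unfolding assms
proof (rule iso_gen[where emb = "emb2 q"])
  show "Psi (emb2 q (d1 \<otimes>\<^bsub>dihedral_group q\<^esub> d2)) = Psi (dmul (emb2 q d1) (emb2 q d2))" for d1 d2
  proof -
    obtain a s b t where d: "d1 = (a, s)" "d2 = (b, t)" by (cases d1; cases d2)
    let ?z = "if s \<noteq> t then int q else 0"
    let ?w = "if s then a - b else a + b"
    have 1: "fst (emb2 q ((a, s) \<otimes>\<^bsub>dihedral_group q\<^esub> (b, t))) = 2 * (?w mod int q) + ?z"
      by (simp add: dih_mult emb2_def)
    have 2: "fst (dmul (emb2 q (a, s)) (emb2 q (b, t))) = 2 * ?w + ?z"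
      by (cases s; cases t) (simp_all add: emb2_def dmul_def algebra_simps)
    have 3: "snd (emb2 q ((a, s) \<otimes>\<^bsub>dihedral_group q\<^esub> (b, t))) = snd (dmul (emb2 q (a, s)) (emb2 q (b, t)))"
      by (simp add: dih_mult emb2_def dmul_def)
    show ?thesis unfolding d
      by (rule Psi_cong) (simp only: 1 2 two_mod_add, rule 3)
  qed
  show "inj_on (\<lambda>d. Psi (emb2 q d)) (carrier (dihedral_group q))"
  proof (rule inj_onI)
    fix d1 d2 assume d: "d1 \<in> carrier (dihedral_group q)" "d2 \<in> carrier (dihedral_group q)"
      "Psi (emb2 q d1) = Psi (emb2 q d2)"
    obtain a s b t where dd: "d1 = (a, s)" "d2 = (b, t)" by (cases d1; cases d2)
    let ?z = "if s then int q else 0"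
    from Psi_inj[OF d(3)] have st: "s = t" and
      m: "(2 * a + ?z) mod (2 * int q) = (2 * b + ?z) mod (2 * int q)"
      by (auto simp: emb2_def dd)
    have "(2 * a) mod (2 * int q) = ((2 * a + ?z) mod (2 * int q) - ?z) mod (2 * int q)"
      by (simp add: mod_diff_left_eq)
    also have "\<dots> = ((2 * b + ?z) mod (2 * int q) - ?z) mod (2 * int q)" by (simp only: m)
    also have "\<dots> = (2 * b) mod (2 * int q)" by (simp add: mod_diff_left_eq)
    finally have "2 * (a mod int q) = 2 * (b mod int q)" by (simp add: mod_mult_mult1)
    then have "a mod int q = b mod int q" by simp
    then have "a = b" using d(1,2) dd by (simp add: dih_carrier)
    then show "d1 = d2" using st dd by simp
  qed
  show "(\<lambda>d. Psi (emb2 q d)) ` carrier (dihedral_group q) = Psi ` P2 q"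
  proof safe
    fix a s assume "(a, s) \<in> carrier (dihedral_group q)"
    show "Psi (emb2 q (a, s)) \<in> Psi ` P2 q" by (auto simp: emb2_def P2_def)
  next
    fix x s assume "(x, s) \<in> P2 q"
    then have "even (x - (if s then int q else 0))" by (simp add: P2_def)
    then obtain y where "x - (if s then int q else 0) = 2 * y" by (elim evenE)
    then have y: "x = 2 * y + (if s then int q else 0)" by simp
    have "(y mod int q, s) \<in> carrier (dihedral_group q)" using q0 by (simp add: dih_carrier)
    moreover have "Psi (x, s) = Psi (emb2 q (y mod int q, s))"
    proof (rule Psi_cong)
      show "fst (x, s) mod (2 * int q) = fst (emb2 q (y mod int q, s)) mod (2 * int q)"
        unfolding y emb2_def fst_conv snd_conv by (simp only: two_mod_add)
    qed (simp add: emb2_def)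
    ultimately show "Psi (x, s) \<in> (\<lambda>d. Psi (emb2 q d)) ` carrier (dihedral_group q)" by blast
  qed
  show "a \<otimes>\<^bsub>dihedral_group q\<^esub> b \<in> carrier (dihedral_group q)"
    if "a \<in> carrier (dihedral_group q)" "b \<in> carrier (dihedral_group q)" for a b
    using dih_closed that q0 by simp
qed

lemma iso_all:
  "Inn_group Q op \<cong> dihedral_group (2 * q div gcd 2 q) \<and> Trans_group Q op \<cong> dihedral_group q"
proof
  show "Trans_group Q op \<cong> dihedral_group q"
    unfolding Trans_group_def by (rule iso_P2[OF gen_trans])
  show "Inn_group Q op \<cong> dihedral_group (2 * q div gcd 2 q)"
  proof (cases "even q")
    case True
    then have "gcd 2 q = 2" by (simp add: gcd_nat.absorb1)
    then show ?thesis unfolding Inn_group_def using iso_P2[OF gen_inn_even[OF True]] by simp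
  next
    case False
    then have "gcd 2 q = 1" by (metis coprime_iff_gcd_eq_1 coprime_left_2_iff_odd)
    then show ?thesis using iso_odd[OF False] by simp
  qed
qed

end


lemma qterms_Gen [simp]: "Gen g \<in> qterms G \<longleftrightarrow> g \<in> G"
  by (simp add: qterms_def)
lemma qterms_Rt [simp]: "Rt x y \<in> qterms G \<longleftrightarrow> x \<in> qterms G \<and> y \<in> qterms G"
  by (auto simp add: qterms_def)
lemma qterms_RtInv [simp]: "RtInv x y \<in> qterms G \<longleftrightarrow> x \<in> qterms G \<and> y \<in> qterms G"
  by (auto simp add: qterms_def)

lemma qcong_terms: "qcong G R s t \<Longrightarrow> s \<in> qterms G \<and> t \<in> qterms G"
  by (induction rule: qcong.induct) auto

context
  fixes G :: "'g set" and R
  assumes invR: "invol_rels G \<subseteq> R"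
begin

abbreviation EQ (infix "\<frown>" 50) where "s \<frown> t \<equiv> qcong G R s t"

lemma EQ_trans [trans]: "s \<frown> t \<Longrightarrow> t \<frown> u \<Longrightarrow> s \<frown> u"
  by (rule qcong.trans)

lemma EQ_sym: "s \<frown> t \<Longrightarrow> t \<frown> s"
  by (rule qcong.sym)

lemma EQ_refl: "t \<in> qterms G \<Longrightarrow> t \<frown> t"
  by (rule qcong.refl)

lemma EQ_Rt: "x \<frown> x' \<Longrightarrow> y \<frown> y' \<Longrightarrow> Rt x y \<frown> Rt x' y'"
  by (rule qcong.cong_Rt)

lemma EQ_RtInv: "x \<frown> x' \<Longrightarrow> y \<frown> y' \<Longrightarrow> RtInv x y \<frown> RtInv x' y'"
  by (rule qcong.cong_RtInv)

lemma EQ_RtL: "x \<frown> x' \<Longrightarrow> y \<in> qterms G \<Longrightarrow> Rt x y \<frown> Rt x' y"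
  by (rule qcong.cong_Rt) (auto intro: qcong.refl)

lemma EQ_RtR: "x \<in> qterms G \<Longrightarrow> y \<frown> y' \<Longrightarrow> Rt x y \<frown> Rt x y'"
  by (rule qcong.cong_Rt) (auto intro: qcong.refl)

lemma EQ_RtInvL: "x \<frown> x' \<Longrightarrow> y \<in> qterms G \<Longrightarrow> RtInv x y \<frown> RtInv x' y"
  by (rule qcong.cong_RtInv) (auto intro: qcong.refl)

lemma EQ_idem: "x \<in> qterms G \<Longrightarrow> Rt x x \<frown> x" by (rule qcong.idem)
lemma EQ_inv1: "x \<in> qterms G \<Longrightarrow> y \<in> qterms G \<Longrightarrow> RtInv (Rt x y) y \<frown> x" by (rule qcong.inv1)
lemma EQ_inv2: "x \<in> qterms G \<Longrightarrow> y \<in> qterms G \<Longrightarrow> Rt (RtInv x y) y \<frown> x" by (rule qcong.inv2)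
lemma EQ_dist: "x \<in> qterms G \<Longrightarrow> y \<in> qterms G \<Longrightarrow> z \<in> qterms G \<Longrightarrow>
   Rt (Rt x y) z \<frown> Rt (Rt x z) (Rt y z)" by (rule qcong.dist)

lemma EQ_DI:
  assumes "x1 \<in> qterms G" "x2 \<in> qterms G" "z \<in> qterms G"
  shows "Rt (RtInv x1 x2) z \<frown> RtInv (Rt x1 z) (Rt x2 z)"
proof -
  let ?w = "RtInv x1 x2"
  have "Rt x1 z \<frown> Rt (Rt ?w x2) z"
    by (rule EQ_RtL[OF EQ_sym[OF EQ_inv2]]) (use assms in auto)
  also have "\<dots> \<frown> Rt (Rt ?w z) (Rt x2 z)" using assms by (intro EQ_dist) auto
  finally have "RtInv (Rt x1 z) (Rt x2 z) \<frown> RtInv (Rt (Rt ?w z) (Rt x2 z)) (Rt x2 z)"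
    using assms by (intro EQ_RtInvL) auto
  also have "\<dots> \<frown> Rt ?w z" using assms by (intro EQ_inv1) auto
  finally show ?thesis by (rule EQ_sym)
qed

lemma EQ_RD:
  assumes "x \<in> qterms G" "y1 \<in> qterms G" "y2 \<in> qterms G"
  shows "Rt x (Rt y1 y2) \<frown> Rt (Rt (RtInv x y2) y1) y2"
proof -
  let ?w = "RtInv x y2"
  have "Rt x (Rt y1 y2) \<frown> Rt (Rt ?w y2) (Rt y1 y2)"
    by (rule EQ_RtL[OF EQ_sym[OF EQ_inv2]]) (use assms in auto)
  also have "\<dots> \<frown> Rt (Rt ?w y1) y2" by (rule EQ_sym[OF EQ_dist]) (use assms in auto)
  finally show ?thesis .
qed

definition INVt :: "'g qterm \<Rightarrow> bool" where
  "INVt y \<longleftrightarrow> (\<forall>x \<in> qterms G. Rt (Rt x y) y \<frown> x)"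

lemma INVt_RtInv: "INVt y \<Longrightarrow> x \<in> qterms G \<Longrightarrow> y \<in> qterms G \<Longrightarrow> RtInv x y \<frown> Rt x y"
proof -
  assume a: "INVt y" "x \<in> qterms G" "y \<in> qterms G"
  have "RtInv x y \<frown> RtInv (Rt (Rt x y) y) y"
    by (rule EQ_RtInvL[OF EQ_sym]) (use a in \<open>auto simp: INVt_def\<close>)
  also have "\<dots> \<frown> Rt x y" using a by (intro EQ_inv1) auto
  finally show ?thesis .
qed

lemma INVt_gen: "g \<in> G \<Longrightarrow> INVt (Gen g)"
  unfolding INVt_def
proof
  fix x assume g: "g \<in> G" and "x \<in> qterms G"
  then show "Rt (Rt x (Gen g)) (Gen g) \<frown> x"
  proof (induction x)
    case (Gen h)
    then show ?case using invR by (intro qcong.rel) (auto simp: invol_rels_def)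
  next
    case (Rt x1 x2)
    let ?g = "Gen g"
    have "Rt (Rt (Rt x1 x2) ?g) ?g \<frown> Rt (Rt (Rt x1 ?g) (Rt x2 ?g)) ?g"
      using Rt by (intro EQ_RtL EQ_dist) auto
    also have "\<dots> \<frown> Rt (Rt (Rt x1 ?g) ?g) (Rt (Rt x2 ?g) ?g)"
      using Rt by (intro EQ_dist) auto
    also have "\<dots> \<frown> Rt x1 x2" using Rt by (intro EQ_Rt) auto
    finally show ?case .
  next
    case (RtInv x1 x2)
    let ?g = "Gen g"
    have "Rt (Rt (RtInv x1 x2) ?g) ?g \<frown> Rt (RtInv (Rt x1 ?g) (Rt x2 ?g)) ?g"
      using RtInv by (intro EQ_RtL EQ_DI) auto
    also have "\<dots> \<frown> RtInv (Rt (Rt x1 ?g) ?g) (Rt (Rt x2 ?g) ?g)"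
      using RtInv by (intro EQ_DI) auto
    also have "\<dots> \<frown> RtInv x1 x2" using RtInv by (intro EQ_RtInv) auto
    finally show ?case .
  qed
qed

lemma INVt_Rt:
  assumes "INVt y1" "INVt y2" "y1 \<in> qterms G" "y2 \<in> qterms G"
  shows "INVt (Rt y1 y2)"
  unfolding INVt_def
proof
  fix x assume x: "x \<in> qterms G"
  let ?Y = "Rt y1 y2"
  let ?T = "\<lambda>x. Rt (Rt (Rt x y2) y1) y2"
  have T: "Rt z ?Y \<frown> ?T z" if "z \<in> qterms G" for z
  proof -
    have "Rt z ?Y \<frown> Rt (Rt (RtInv z y2) y1) y2" using that assms by (intro EQ_RD) auto
    also have "\<dots> \<frown> ?T z" using that assms by (intro EQ_RtL INVt_RtInv) auto
    finally show ?thesis .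
  qed
  have I1: "Rt (Rt z y1) y1 \<frown> z" if "z \<in> qterms G" for z using assms that by (auto simp: INVt_def)
  have I2: "Rt (Rt z y2) y2 \<frown> z" if "z \<in> qterms G" for z using assms that by (auto simp: INVt_def)
  have "Rt (Rt x ?Y) ?Y \<frown> ?T (Rt x ?Y)" using x assms by (intro T) auto
  also have "\<dots> \<frown> ?T (?T x)" using x assms by (intro EQ_RtL T) auto
  also have "\<dots> \<frown> Rt (Rt (Rt (Rt x y2) y1) y1) y2"
    using x assms by (intro EQ_RtL I2) auto
  also have "\<dots> \<frown> Rt (Rt x y2) y2"
    using x assms by (intro EQ_RtL I1) auto
  also have "\<dots> \<frown> x" using x by (rule I2)
  finally show "Rt (Rt x ?Y) ?Y \<frown> x" .
qed

lemma INVt_cong: "INVt y \<Longrightarrow> y \<frown> y' \<Longrightarrow> INVt y'"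
  unfolding INVt_def
proof
  fix x assume a: "\<forall>x\<in>qterms G. Rt (Rt x y) y \<frown> x" "y \<frown> y'" "x \<in> qterms G"
  have "Rt (Rt x y') y' \<frown> Rt (Rt x y) y"
    by (rule EQ_Rt[OF EQ_RtR[OF _ EQ_sym[OF a(2)]] EQ_sym[OF a(2)]]) (use a in auto)
  also have "\<dots> \<frown> x" using a by auto
  finally show "Rt (Rt x y') y' \<frown> x" .
qed

lemma INVt_all: "y \<in> qterms G \<Longrightarrow> INVt y"
proof (induction y)
  case (Gen g) then show ?case by (auto intro: INVt_gen)
next
  case (Rt y1 y2) then show ?case by (auto intro: INVt_Rt)
next
  case (RtInv y1 y2)
  then have "INVt (Rt y1 y2)" by (auto intro: INVt_Rt)
  moreover have "Rt y1 y2 \<frown> RtInv y1 y2" by (rule EQ_sym[OF INVt_RtInv]) (use RtInv in auto)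
  ultimately show ?case by (rule INVt_cong)
qed

lemma EQ_invol: "x \<in> qterms G \<Longrightarrow> y \<in> qterms G \<Longrightarrow> Rt (Rt x y) y \<frown> x"
  using INVt_all by (auto simp: INVt_def)

lemma EQ_RtInv_Rt: "x \<in> qterms G \<Longrightarrow> y \<in> qterms G \<Longrightarrow> RtInv x y \<frown> Rt x y"
  using INVt_all INVt_RtInv by blast

end


definition RR :: "nat \<Rightarrow> (arc qterm \<times> arc qterm) set" where
  "RR q = TA_rels q \<union> invol_rels (TA_gens q)"

lemma invR: "invol_rels (TA_gens q) \<subseteq> RR q" by (simp add: RR_def)

lemma TA_gens_T [simp]: "ArcT k \<in> TA_gens q \<longleftrightarrow> k \<le> q + 1"
  by (auto simp: TA_gens_def)
lemma TA_gens_A [simp]: "ArcA i \<in> TA_gens q \<longleftrightarrow> i \<le> 1"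
  by (auto simp: TA_gens_def)

fun ev :: "nat \<Rightarrow> arc qterm \<Rightarrow> mel" where
  "ev q (Gen (ArcT k)) = MT (int k mod (2 * int q))"
| "ev q (Gen (ArcA i)) = MA (i \<noteq> 0)"
| "ev q (Rt x y) = opM q (ev q x) (ev q y)"
| "ev q (RtInv x y) = opM q (ev q x) (ev q y)"

definition rep :: "nat \<Rightarrow> mel \<Rightarrow> arc qterm" where
  "rep q m = (case m of MT j \<Rightarrow> if j \<le> int q + 1 then Gen (ArcT (nat j))
                         else Rt (Gen (ArcT (nat (j - int q)))) (Gen (ArcA 0))
              | MA b \<Rightarrow> Gen (ArcA (if b then 1 else 0)))"

lemma ev_Mset: "q > 0 \<Longrightarrow> ev q t \<in> Mset q"
proof (cases t)
  case (Gen g) assume "q > 0" then show ?thesis using Gen by (cases g) (auto simp: Mset_def)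
qed (auto simp: opM_Mset)

lemma ev_sound:
  assumes q: "q > 2" and "qcong (TA_gens q) (RR q) s t"
  shows "ev q s = ev q t"
  using assms(2)
proof (induction rule: qcong.induct)
  case (rel s t)
  have q0: "q > 0" using q by simp
  from rel(1) show ?case
    unfolding RR_def
  proof
    assume "(s, t) \<in> TA_rels q"
    then show ?thesis
      unfolding TA_rels_def
    proof (elim UnE CollectE exE conjE insertE emptyE)
      fix k assume st: "(s, t) = (Gen (ArcT (k + 1)), Rt (Gen (ArcT (k - 1))) (Gen (ArcT k)))"
        and k: "1 \<le> k" "k \<le> q"
      have a: "int (k - 1) = int k - 1" using k by simp
      have "(2 * (int k mod (2 * int q)) - (int k - 1) mod (2 * int q)) mod (2 * int q)
            = (2 * int k - (int k - 1)) mod (2 * int q)"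
        by (metis mod_diff_left_eq mod_diff_right_eq mod_mult_right_eq)
      also have "\<dots> = int (k + 1) mod (2 * int q)" by (simp add: add.commute)
      finally show ?thesis using st a
        by (simp add: opM_def gM_def psi_def)
    next
      assume "(s, t) = (Gen (ArcA 1), Rt (Gen (ArcA 0)) (Gen (ArcT (q + 1))))"
      then show ?thesis by (simp add: opM_def gM_def psi_def)
    next
      assume "(s, t) = (Gen (ArcA 0), Rt (Gen (ArcA 1)) (Gen (ArcT q)))"
      then show ?thesis by (simp add: opM_def gM_def psi_def)
    next
      assume "(s, t) = (Gen (ArcT 1), Rt (Gen (ArcT (q + 1))) (Gen (ArcA 0)))"
      moreover have "(int q + (1 + int q) mod (2 * int q)) mod (2 * int q) = 1 mod (2 * int q)"
      proof -
        have "(int q + (1 + int q) mod (2 * int q)) mod (2 * int q) = (int q + (1 + int q)) mod (2 * int q)"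
          by (rule mod_add_right_eq)
        also have "int q + (1 + int q) = 1 + 1 * (2 * int q)" by simp
        finally show ?thesis by (metis mod_mult_self1)
      qed
      ultimately show ?thesis by (simp add: opM_def gM_def psi_def)
    next
      assume "(s, t) = (Gen (ArcT 0), Rt (Gen (ArcT q)) (Gen (ArcA 0)))"
      moreover have "(int q + int q mod (2 * int q)) mod (2 * int q) = 0"
      proof -
        have "(int q + int q mod (2 * int q)) mod (2 * int q) = (int q + int q) mod (2 * int q)"
          by (rule mod_add_right_eq)
        also have "int q + int q = 2 * int q" by simp
        finally show ?thesis by simp
      qed
      ultimately show ?thesis by (simp add: opM_def gM_def psi_def)
    qed
  next
    assume "(s, t) \<in> invol_rels (TA_gens q)"
    then obtain x y where "s = Rt (Rt (Gen x) (Gen y)) (Gen y)" "t = Gen x"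
      by (auto simp: invol_rels_def)
    then show ?thesis using opM_invol[OF q0 ev_Mset[OF q0, of "Gen x"]] by simp
  qed
next
  case (idem x) then show ?case using q by (simp add: opM_idem ev_Mset)
next
  case (inv1 x y) then show ?case using q by (simp add: opM_invol ev_Mset)
next
  case (inv2 x y) then show ?case using q by (simp add: opM_invol ev_Mset)
next
  case (dist x y z) show ?case using q by (simp only: ev.simps) (rule opM_dist, simp)
qed auto


context
  fixes q :: nat
  assumes q2: "q > 2"
begin

abbreviation EQq (infix "\<frown>" 50) where "s \<frown> t \<equiv> qcong (TA_gens q) (RR q) s t"
abbreviation GT where "GT k \<equiv> Gen (ArcT k)"
abbreviation GA where "GA i \<equiv> Gen (ArcA i)"

lemma qpos: "q > 0" using q2 by simp

lemmas INV = EQ_invol[OF invR]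
lemmas RtInv_Rt = EQ_RtInv_Rt[OF invR]
lemmas RD = EQ_RD[OF invR]
lemmas ERtL = EQ_RtL[OF invR]
lemmas ERtR = EQ_RtR[OF invR]
lemmas ERt = EQ_Rt[OF invR]
lemmas Esym = EQ_sym[OF invR]
lemmas Erefl = EQ_refl[OF invR]
lemmas Edist = EQ_dist[OF invR]
lemmas Eidem = EQ_idem[OF invR]

lemma Etrans [trans]: "s \<frown> t \<Longrightarrow> t \<frown> u \<Longrightarrow> s \<frown> u"
  by (rule qcong.trans)

lemma R1: "1 \<le> k \<Longrightarrow> k \<le> q \<Longrightarrow> GT (k + 1) \<frown> Rt (GT (k - 1)) (GT k)"
  by (rule qcong.rel) (auto simp: RR_def TA_rels_def)
lemma R2: "GA 1 \<frown> Rt (GA 0) (GT (q + 1))"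
  by (rule qcong.rel) (auto simp: RR_def TA_rels_def)
lemma R3: "GA 0 \<frown> Rt (GA 1) (GT q)"
  by (rule qcong.rel) (auto simp: RR_def TA_rels_def)
lemma R4: "GT 1 \<frown> Rt (GT (q + 1)) (GA 0)"
  by (rule qcong.rel) (auto simp: RR_def TA_rels_def)
lemma R5: "GT 0 \<frown> Rt (GT q) (GA 0)"
  by (rule qcong.rel) (auto simp: RR_def TA_rels_def)

definition D :: "int \<Rightarrow> arc qterm" where
  "D k = rep q (MT (k mod (2 * int q)))"

lemma D_cong: "x mod (2 * int q) = y mod (2 * int q) \<Longrightarrow> D x = D y"
  by (simp add: D_def)

lemma D_small: "0 \<le> k \<Longrightarrow> k \<le> int q + 1 \<Longrightarrow> D k = GT (nat k)"
  using q2 by (simp add: D_def rep_def)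

lemma D_big: "int q + 2 \<le> k \<Longrightarrow> k < 2 * int q \<Longrightarrow> D k = Rt (GT (nat (k - int q))) (GA 0)"
  using q2 by (simp add: D_def rep_def)

lemma D_terms: "D k \<in> qterms (TA_gens q)"
proof -
  have "0 \<le> k mod (2 * int q)" "k mod (2 * int q) < 2 * int q" using qpos by simp_all
  then show ?thesis by (auto simp: D_def rep_def nat_le_iff)
qed

lemma L0:
  assumes "j \<le> q + 1"
  shows "D (int j + int q) \<frown> Rt (GT j) (GA 0)"
proof -
  consider "j = 0" | "j = 1" | "2 \<le> j \<and> j \<le> q - 1" | "j = q" | "j = q + 1" using assms by linarith
  then show ?thesis
  proof cases
    case 1
    have "D (int j + int q) = GT q" using 1 by (simp add: D_small)
    moreover have "Rt (GT 0) (GA 0) \<frown> Rt (Rt (GT q) (GA 0)) (GA 0)" by (rule ERtL[OF R5]) simp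
    moreover have "Rt (Rt (GT q) (GA 0)) (GA 0) \<frown> GT q" by (rule INV) simp_all
    ultimately show ?thesis using 1 by (metis Esym Etrans)
  next
    case 2
    have "D (int j + int q) = GT (q + 1)" using 2 D_small[of "int q + 1"] by (simp add: add.commute)
    moreover have "Rt (GT 1) (GA 0) \<frown> Rt (Rt (GT (q + 1)) (GA 0)) (GA 0)" by (rule ERtL[OF R4]) simp
    moreover have "Rt (Rt (GT (q + 1)) (GA 0)) (GA 0) \<frown> GT (q + 1)" by (rule INV) simp_all
    ultimately show ?thesis using 2 by (metis Esym Etrans)
  next
    case 3
    then have "D (int j + int q) = Rt (GT j) (GA 0)" using q2 by (subst D_big) auto
    moreover have "Rt (GT j) (GA 0) \<frown> Rt (GT j) (GA 0)" using 3 by (intro qcong.refl) auto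
    ultimately show ?thesis by simp
  next
    case 4
    have "D (int j + int q) = D 0" using 4 by (intro D_cong) simp
    also have "\<dots> = GT 0" by (simp add: D_small)
    finally show ?thesis using 4 R5 by simp
  next
    case 5
    have "D (int j + int q) = D 1" using 5 by (intro D_cong) simp
    also have "\<dots> = GT 1" by (simp add: D_small)
    finally show ?thesis using 5 R4 by simp
  qed
qed


lemma L1_core:
  assumes "1 \<le> k" "k \<le> 2 * int q"
  shows "D (k + 1) \<frown> Rt (D (k - 1)) (D k)"
proof (cases "k \<le> int q")
  case True
  define n where "n = nat k"
  have k: "k = int n" using assms n_def by simp
  have n: "1 \<le> n" "n \<le> q" using assms True k by simp_all
  have "D (k + 1) = GT (n + 1)" using k n by (subst D_small) auto
  moreover have "D (k - 1) = GT (n - 1)" using k n by (subst D_small) auto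
  moreover have "D k = GT n" using k n by (subst D_small) auto
  ultimately show ?thesis using R1[OF n] by simp
next
  case False
  define m where "m = nat (k - int q)"
  have k: "k = int m + int q" using False m_def by simp
  have m: "1 \<le> m" "m \<le> q" using assms False k by simp_all
  have a: "D (k - 1) \<frown> Rt (GT (m - 1)) (GA 0)"
    using L0[of "m - 1"] m k by (simp add: of_nat_diff algebra_simps)
  have b: "D k \<frown> Rt (GT m) (GA 0)" using L0[of m] m k by simp
  have c: "D (k + 1) \<frown> Rt (GT (m + 1)) (GA 0)"
    using L0[of "m + 1"] m k by (simp add: algebra_simps)
  have "D (k + 1) \<frown> Rt (GT (m + 1)) (GA 0)" by (rule c)
  also have "\<dots> \<frown> Rt (Rt (GT (m - 1)) (GT m)) (GA 0)" by (rule ERtL[OF R1[OF m]]) simp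
  also have "\<dots> \<frown> Rt (Rt (GT (m - 1)) (GA 0)) (Rt (GT m) (GA 0))" by (rule Edist) (use m in auto)
  also have "\<dots> \<frown> Rt (D (k - 1)) (D k)" by (rule ERt[OF Esym[OF a] Esym[OF b]])
  finally show ?thesis .
qed

lemma L1:
  assumes "k' = k + 1" "k'' = k - 1"
  shows "D k' \<frown> Rt (D k'') (D k)"
proof -
  define k0 where "k0 = (k - 1) mod (2 * int q) + 1"
  have "(k - 1) mod (2 * int q) < 2 * int q" "0 \<le> (k - 1) mod (2 * int q)" using qpos by simp_all
  then have r: "1 \<le> k0" "k0 \<le> 2 * int q" unfolding k0_def by linarith+
  have e0: "D k0 = D k"
    by (rule D_cong) (simp add: k0_def mod_add_left_eq)
  have e1: "D (k0 + 1) = D k'"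
  proof (rule D_cong)
    have "(k0 + 1) mod (2 * int q) = ((k - 1) mod (2 * int q) + 2) mod (2 * int q)"
      by (simp add: k0_def add.assoc)
    also have "\<dots> = (k - 1 + 2) mod (2 * int q)" by (rule mod_add_left_eq)
    finally show "(k0 + 1) mod (2 * int q) = k' mod (2 * int q)" using assms by (simp add: add.commute)
  qed
  have e2: "D (k0 - 1) = D k''"
    by (rule D_cong) (simp add: assms k0_def)
  show ?thesis using L1_core[OF r] e0 e1 e2 by simp
qed

lemma L2: "Rt (D (j + int m)) (D j) \<frown> D (j - int m) \<and> Rt (D (j + int (m + 1))) (D j) \<frown> D (j - int (m + 1))"
proof (induction m arbitrary: j)
  case 0
  have "Rt (D j) (D j) \<frown> D j" by (rule Eidem) (rule D_terms)
  moreover have "Rt (D (j + 1)) (D j) \<frown> D (j - 1)"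
  proof -
    have "Rt (D (j + 1)) (D j) \<frown> Rt (Rt (D (j - 1)) (D j)) (D j)"
      by (rule ERtL[OF L1]) (simp_all add: D_terms)
    also have "\<dots> \<frown> D (j - 1)" by (rule INV) (simp_all add: D_terms)
    finally show ?thesis .
  qed
  ultimately show ?case by simp
next
  case (Suc m)
  have IH1: "Rt (D (j + int m)) (D j) \<frown> D (j - int m)"
   and IH2: "Rt (D (j + int m + 1)) (D j) \<frown> D (j - int m - 1)"
    using Suc.IH[of j] by (simp_all add: algebra_simps)
  have "Rt (D (j + int m + 2)) (D j) \<frown> Rt (Rt (D (j + int m)) (D (j + int m + 1))) (D j)"
    by (rule ERtL[OF L1]) (simp_all add: D_terms)
  also have "\<dots> \<frown> Rt (Rt (D (j + int m)) (D j)) (Rt (D (j + int m + 1)) (D j))"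
    by (rule Edist) (simp_all add: D_terms)
  also have "\<dots> \<frown> Rt (D (j - int m)) (D (j - int m - 1))"
    by (rule ERt[OF IH1 IH2])
  also have "\<dots> \<frown> Rt (Rt (D (j - int m - 2)) (D (j - int m - 1))) (D (j - int m - 1))"
    by (rule ERtL[OF L1]) (simp_all add: D_terms)
  also have "\<dots> \<frown> D (j - int m - 2)" by (rule INV) (simp_all add: D_terms)
  finally have "Rt (D (j + int m + 2)) (D j) \<frown> D (j - int m - 2)" .
  moreover have "Rt (D (j + int (Suc m))) (D j) \<frown> D (j - int (Suc m))"
    using IH2 by (simp add: algebra_simps)
  ultimately show ?case by (simp add: algebra_simps)
qed

lemma L3: "Rt (D i) (D j) \<frown> D (2 * j - i)"
proof (cases "j \<le> i")
  case True
  define m where "m = nat (i - j)"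
  have e: "j + int m = i" "j - int m = 2 * j - i" using True m_def by simp_all
  have "Rt (D (j + int m)) (D j) \<frown> D (j - int m)" using L2[of j m] by blast
  then show ?thesis by (simp only: e)
next
  case False
  define m where "m = nat (j - i)"
  have im: "i = j - int m" "2 * j - i = j + int m" using False m_def by simp_all
  have "Rt (D i) (D j) \<frown> Rt (Rt (D (j + int m)) (D j)) (D j)"
    unfolding im by (rule ERtL[OF Esym]) (use L2[of j m] in \<open>simp_all add: D_terms\<close>)
  also have "\<dots> \<frown> D (j + int m)" by (rule INV) (simp_all add: D_terms)
  finally have "Rt (D i) (D j) \<frown> D (j + int m)" .
  then show ?thesis by (simp only: im(2))
qed


lemma C1_aux: "n \<le> q \<Longrightarrow> Rt (Rt (GA 0) (GT (q - n + 1))) (GT (q - n)) \<frown> GA 0"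
proof (induction n)
  case 0
  have "Rt (Rt (GA 0) (GT (q + 1))) (GT q) \<frown> Rt (GA 1) (GT q)" by (rule ERtL[OF Esym[OF R2]]) simp
  also have "\<dots> \<frown> GA 0" by (rule Esym[OF R3])
  finally show ?case by simp
next
  case (Suc n)
  define k where "k = q - Suc n"
  have kk: "q - n = k + 1" "q - n + 1 = k + 2" "q - Suc n = k" using Suc.prems k_def by simp_all
  have IH: "Rt (Rt (GA 0) (GT (k + 2))) (GT (k + 1)) \<frown> GA 0" using Suc kk by simp
  have k1: "1 \<le> k + 1" "k + 1 \<le> q" using Suc.prems k_def by simp_all
  have r: "GT (k + 2) \<frown> Rt (GT k) (GT (k + 1))" using R1[OF k1] by (simp add: add.assoc)
  have t: "GT k \<in> qterms (TA_gens q)" "GT (k + 1) \<in> qterms (TA_gens q)" "GT (k + 2) \<in> qterms (TA_gens q)"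
    using k1 by simp_all
  have "Rt (GA 0) (GT (k + 2)) \<frown> Rt (GA 0) (Rt (GT k) (GT (k + 1)))" by (rule ERtR[OF _ r]) simp
  also have "\<dots> \<frown> Rt (Rt (RtInv (GA 0) (GT (k + 1))) (GT k)) (GT (k + 1))" by (rule RD) (use t in simp_all)
  also have "\<dots> \<frown> Rt (Rt (Rt (GA 0) (GT (k + 1))) (GT k)) (GT (k + 1))"
    by (rule ERtL[OF ERtL[OF RtInv_Rt]]) (use t in simp_all)
  finally have A: "Rt (GA 0) (GT (k + 2)) \<frown> Rt (Rt (Rt (GA 0) (GT (k + 1))) (GT k)) (GT (k + 1))" .
  have "GA 0 \<frown> Rt (Rt (GA 0) (GT (k + 2))) (GT (k + 1))" by (rule Esym[OF IH])
  also have "\<dots> \<frown> Rt (Rt (Rt (Rt (GA 0) (GT (k + 1))) (GT k)) (GT (k + 1))) (GT (k + 1))"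
    by (rule ERtL[OF A]) (use t in simp)
  also have "\<dots> \<frown> Rt (Rt (GA 0) (GT (k + 1))) (GT k)" by (rule INV) (use t in simp_all)
  finally show ?case using kk by (simp add: Esym)
qed

lemma C1: "k \<le> q \<Longrightarrow> Rt (Rt (GA 0) (GT (k + 1))) (GT k) \<frown> GA 0"
  using C1_aux[of "q - k"] by simp

lemma C2_aux: "n \<le> q + 1 \<Longrightarrow> Rt (GA 0) (GT (q + 1 - n)) \<frown> GA 1"
proof (induction n)
  case 0 then show ?case using Esym[OF R2] by simp
next
  case (Suc n)
  define k where "k = q - n"
  have kk: "q + 1 - n = k + 1" "q + 1 - Suc n = k" "k \<le> q" using Suc.prems k_def by simp_all
  have IH: "Rt (GA 0) (GT (k + 1)) \<frown> GA 1" using Suc kk by simp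
  have t: "GT k \<in> qterms (TA_gens q)" using kk by simp
  have "Rt (GA 1) (GT k) \<frown> Rt (Rt (GA 0) (GT (k + 1))) (GT k)" by (rule ERtL[OF Esym[OF IH]]) (use t in simp)
  also have "\<dots> \<frown> GA 0" by (rule C1[OF kk(3)])
  finally have B: "Rt (GA 1) (GT k) \<frown> GA 0" .
  have "Rt (GA 0) (GT k) \<frown> Rt (Rt (GA 1) (GT k)) (GT k)" by (rule ERtL[OF Esym[OF B]]) (use t in simp)
  also have "\<dots> \<frown> GA 1" by (rule INV) (use t in simp_all)
  finally show ?case using kk by simp
qed

lemma C2: "k \<le> q + 1 \<Longrightarrow> Rt (GA 0) (GT k) \<frown> GA 1"
  using C2_aux[of "q + 1 - k"] by simp

lemma C3: "k \<le> q + 1 \<Longrightarrow> Rt (GA 1) (GT k) \<frown> GA 0"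
proof -
  assume k: "k \<le> q + 1"
  have "Rt (GA 1) (GT k) \<frown> Rt (Rt (GA 0) (GT k)) (GT k)" by (rule ERtL[OF Esym[OF C2[OF k]]]) (use k in simp)
  also have "\<dots> \<frown> GA 0" by (rule INV) (use k in simp_all)
  finally show ?thesis .
qed

lemma C4: "Rt (GA 1) (GA 0) \<frown> GA 1"
proof -
  have "Rt (GA 1) (GA 0) \<frown> Rt (Rt (GA 0) (GT (q + 1))) (GA 0)" by (rule ERtL[OF R2]) simp
  also have "\<dots> \<frown> Rt (Rt (GA 0) (GA 0)) (Rt (GT (q + 1)) (GA 0))" by (rule Edist) simp_all
  also have "\<dots> \<frown> Rt (GA 0) (GT 1)" by (rule ERt[OF Eidem Esym[OF R4]]) simp
  also have "\<dots> \<frown> GA 1" by (rule C2) simp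
  finally show ?thesis .
qed


lemma Mset_cases:
  assumes "u \<in> Mset q"
  obtains i where "u = MT i" "0 \<le> i" "i < 2 * int q" | b where "u = MA b"
  using assms by (auto simp: Mset_def)

lemma rep_MT: "0 \<le> i \<Longrightarrow> i < 2 * int q \<Longrightarrow> rep q (MT i) = D i"
  by (simp add: D_def)

lemma rep_terms: "u \<in> Mset q \<Longrightarrow> rep q u \<in> qterms (TA_gens q)"
  by (erule Mset_cases) (auto simp add: rep_def nat_le_iff)

lemma ev_rep: "u \<in> Mset q \<Longrightarrow> ev q (rep q u) = u"
proof (erule Mset_cases)
  fix i assume u: "u = MT i" and i: "0 \<le> i" "i < 2 * int q"
  show "ev q (rep q u) = u"
  proof (cases "i \<le> int q + 1")
    case True then show ?thesis using u i by (simp add: rep_def)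
  next
    case False
    have m: "(i - int q) mod (2 * int q) = i - int q" using False i by simp
    have "(int q + (i - int q)) mod (2 * int q) = i" using i by simp
    then show ?thesis using u False m by (simp add: rep_def opM_def gM_def psi_def)
  qed
next
  fix b assume "u = MA b" then show "ev q (rep q u) = u" by (simp add: rep_def)
qed

lemma opM_conj:
  assumes "u \<in> Mset q"
  shows "opM q (opM q (opM q u e2) e1) e2 = opM q u (opM q e1 e2)"
proof -
  have "opM q u (opM q e1 e2) = opM q (opM q (opM q u e2) e2) (opM q e1 e2)"
    using opM_invol[OF qpos assms] by simp
  also have "\<dots> = opM q (opM q (opM q u e2) e1) e2"
    by (rule opM_dist[OF qpos, symmetric])
  finally show ?thesis by simp
qed

definition Pq :: "arc qterm \<Rightarrow> bool" where
  "Pq y \<longleftrightarrow> y \<in> qterms (TA_gens q) \<and> (\<forall>u \<in> Mset q. Rt (rep q u) y \<frown> rep q (opM q u (ev q y)))"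

lemma P_T: "k \<le> q + 1 \<Longrightarrow> Pq (GT k)"
  unfolding Pq_def
proof (intro conjI ballI)
  assume k: "k \<le> q + 1"
  then show "GT k \<in> qterms (TA_gens q)" by simp
  fix u assume "u \<in> Mset q"
  then show "Rt (rep q u) (GT k) \<frown> rep q (opM q u (ev q (GT k)))"
  proof (rule Mset_cases)
    fix i assume u: "u = MT i" and i: "0 \<le> i" "i < 2 * int q"
    have "opM q u (ev q (GT k)) = MT ((2 * (int k mod (2 * int q)) - i) mod (2 * int q))"
      using u by (simp add: opM_def gM_def psi_def)
    then have "rep q (opM q u (ev q (GT k))) = D (2 * (int k mod (2 * int q)) - i)" by (simp add: D_def)
    also have "\<dots> = D (2 * int k - i)"
    proof (rule D_cong)
      have "(2 * (int k mod (2 * int q)) - i) mod (2 * int q) = ((2 * (int k mod (2 * int q))) mod (2 * int q) - i) mod (2 * int q)"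
        by (rule mod_diff_left_eq[symmetric])
      also have "(2 * (int k mod (2 * int q))) mod (2 * int q) = (2 * int k) mod (2 * int q)"
        by (rule mod_mult_right_eq)
      also have "((2 * int k) mod (2 * int q) - i) mod (2 * int q) = (2 * int k - i) mod (2 * int q)"
        by (rule mod_diff_left_eq)
      finally show "(2 * (int k mod (2 * int q)) - i) mod (2 * int q) = (2 * int k - i) mod (2 * int q)" .
    qed
    finally have e: "rep q (opM q u (ev q (GT k))) = D (2 * int k - i)" .
    have "GT k = D (int k)" using k by (simp add: D_small)
    then show ?thesis using L3[of i "int k"] e u i by (simp add: rep_MT)
  next
    fix b assume u: "u = MA b"
    show ?thesis
    proof (cases b)
      case True then show ?thesis using u C3[OF k] by (simp add: opM_def gM_def psi_def rep_def)
    next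
      case False then show ?thesis using u C2[OF k] by (simp add: opM_def gM_def psi_def rep_def)
    qed
  qed
qed

lemma P_c0: "Pq (GA 0)"
  unfolding Pq_def
proof (intro conjI ballI)
  show "GA 0 \<in> qterms (TA_gens q)" by simp
  fix u assume "u \<in> Mset q"
  then show "Rt (rep q u) (GA 0) \<frown> rep q (opM q u (ev q (GA 0)))"
  proof (rule Mset_cases)
    fix i assume u: "u = MT i" and i: "0 \<le> i" "i < 2 * int q"
    have e: "rep q (opM q u (ev q (GA 0))) = D (int q + i)"
      using u by (simp add: opM_def gM_def psi_def D_def)
    show ?thesis
    proof (cases "i \<le> int q + 1")
      case True
      define n where "n = nat i"
      have n: "i = int n" "n \<le> q + 1" using True i n_def by simp_all
      have "rep q u = GT n" using u n by (simp add: rep_def)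
      moreover have "D (int q + i) \<frown> Rt (GT n) (GA 0)" using L0[OF n(2)] n by (simp add: add.commute)
      ultimately show ?thesis using e by (simp add: Esym)
    next
      case False
      have ru: "rep q u = Rt (GT (nat (i - int q))) (GA 0)" using u False by (simp add: rep_def)
      have t: "GT (nat (i - int q)) \<in> qterms (TA_gens q)" using i by simp
      have "Rt (rep q u) (GA 0) \<frown> GT (nat (i - int q))" unfolding ru by (rule INV) (use t in simp_all)
      also have "GT (nat (i - int q)) = D (i - int q)" using False i by (simp add: D_small)
      also have "\<dots> = D (int q + i)"
      proof (rule D_cong)
        have "int q + i = (i - int q) + 1 * (2 * int q)" by simp
        then show "(i - int q) mod (2 * int q) = (int q + i) mod (2 * int q)" by (metis mod_mult_self1)
      qed
      finally show ?thesis using e by simp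
    qed
  next
    fix b assume u: "u = MA b"
    show ?thesis
    proof (cases b)
      case True then show ?thesis using u C4 by (simp add: opM_def gM_def psi_def rep_def)
    next
      case False then show ?thesis using u Eidem[of "GA 0"] by (simp add: opM_def gM_def psi_def rep_def)
    qed
  qed
qed

lemma P_cong: "Pq y \<Longrightarrow> y \<frown> y' \<Longrightarrow> Pq y'"
  unfolding Pq_def
proof (intro conjI ballI)
  assume P: "y \<in> qterms (TA_gens q) \<and> (\<forall>u\<in>Mset q. Rt (rep q u) y \<frown> rep q (opM q u (ev q y)))"
    and e: "y \<frown> y'"
  show "y' \<in> qterms (TA_gens q)" using qcong_terms[OF e] by simp
  fix u assume u: "u \<in> Mset q"
  have "Rt (rep q u) y' \<frown> Rt (rep q u) y" by (rule ERtR[OF rep_terms[OF u] Esym[OF e]])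
  also have "\<dots> \<frown> rep q (opM q u (ev q y))" using P u by blast
  also have "ev q y = ev q y'" by (rule ev_sound[OF q2 e])
  finally show "Rt (rep q u) y' \<frown> rep q (opM q u (ev q y'))" .
qed

lemma P_Rt: "Pq y1 \<Longrightarrow> Pq y2 \<Longrightarrow> Pq (Rt y1 y2)"
  unfolding Pq_def
proof (intro conjI ballI)
  assume P1: "y1 \<in> qterms (TA_gens q) \<and> (\<forall>u\<in>Mset q. Rt (rep q u) y1 \<frown> rep q (opM q u (ev q y1)))"
    and P2: "y2 \<in> qterms (TA_gens q) \<and> (\<forall>u\<in>Mset q. Rt (rep q u) y2 \<frown> rep q (opM q u (ev q y2)))"
  then show "Rt y1 y2 \<in> qterms (TA_gens q)" by simp
  fix u assume u: "u \<in> Mset q"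
  define u1 where "u1 = opM q u (ev q y2)"
  define u2 where "u2 = opM q u1 (ev q y1)"
  have u1: "u1 \<in> Mset q" "u2 \<in> Mset q" unfolding u1_def u2_def by (simp_all add: opM_Mset qpos)
  have t: "y1 \<in> qterms (TA_gens q)" "y2 \<in> qterms (TA_gens q)" "rep q u \<in> qterms (TA_gens q)"
    "rep q u1 \<in> qterms (TA_gens q)" using P1 P2 rep_terms u u1 by auto
  have "rep q u \<frown> Rt (Rt (rep q u) y2) y2" by (rule Esym[OF INV]) (use t in simp_all)
  also have "\<dots> \<frown> Rt (rep q u1) y2" unfolding u1_def by (rule ERtL) (use P2 u in auto)
  finally have a: "rep q u \<frown> Rt (rep q u1) y2" .
  have "Rt (rep q u) (Rt y1 y2) \<frown> Rt (Rt (rep q u1) y2) (Rt y1 y2)" by (rule ERtL[OF a]) (use t in simp)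
  also have "\<dots> \<frown> Rt (Rt (rep q u1) y1) y2" by (rule Esym[OF Edist]) (use t in simp_all)
  also have "\<dots> \<frown> Rt (rep q u2) y2" unfolding u2_def by (rule ERtL) (use P1 u1 t in auto)
  also have "\<dots> \<frown> rep q (opM q u2 (ev q y2))" using P2 u1 by blast
  also have "opM q u2 (ev q y2) = opM q u (ev q (Rt y1 y2))"
    unfolding u2_def u1_def by (simp add: opM_conj[OF u])
  finally show "Rt (rep q u) (Rt y1 y2) \<frown> rep q (opM q u (ev q (Rt y1 y2)))" .
qed

lemma P_all: "y \<in> qterms (TA_gens q) \<Longrightarrow> Pq y"
proof (induction y)
  case (Gen g)
  show ?case
  proof (cases g)
    case (ArcT k) then show ?thesis using Gen P_T by simp
  next
    case (ArcA i)
    then have "i = 0 \<or> i = 1" using Gen by auto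
    then show ?thesis
    proof
      assume "i = 0" then show ?thesis using ArcA P_c0 by simp
    next
      assume i: "i = 1"
      have "Pq (Rt (GA 0) (GT (q + 1)))" by (rule P_Rt[OF P_c0 P_T]) simp
      then show ?thesis using P_cong Esym[OF R2] ArcA i by blast
    qed
  qed
next
  case (Rt y1 y2) then show ?case by (simp add: P_Rt)
next
  case (RtInv y1 y2)
  then have "Pq (Rt y1 y2)" by (simp add: P_Rt)
  moreover have "Rt y1 y2 \<frown> RtInv y1 y2" by (rule Esym[OF RtInv_Rt]) (use RtInv in simp_all)
  ultimately show ?case by (rule P_cong)
qed

lemma complete: "t \<in> qterms (TA_gens q) \<Longrightarrow> t \<frown> rep q (ev q t)"
proof (induction t)
  case (Gen g)
  show ?case
  proof (cases g)
    case (ArcT k)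
    then have "k \<le> q + 1" using Gen by simp
    then have "rep q (ev q (Gen g)) = Gen g" using ArcT q2 by (simp add: rep_def)
    then show ?thesis using Gen by (simp add: qcong.refl)
  next
    case (ArcA i)
    then have "i = 0 \<or> i = 1" using Gen by auto
    then have "rep q (ev q (Gen g)) = Gen g" using ArcA by (auto simp: rep_def)
    then show ?thesis using Gen by (simp add: qcong.refl)
  qed
next
  case (Rt x y)
  have ex: "ev q x \<in> Mset q" by (rule ev_Mset[OF qpos])
  have "Rt x y \<frown> Rt (rep q (ev q x)) y" by (rule ERtL) (use Rt in simp_all)
  also have "\<dots> \<frown> rep q (opM q (ev q x) (ev q y))" using P_all[of y] Rt ex by (simp add: Pq_def)
  finally show ?case by simp
next
  case (RtInv x y)
  have ex: "ev q x \<in> Mset q" by (rule ev_Mset[OF qpos])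
  have "RtInv x y \<frown> Rt x y" by (rule RtInv_Rt) (use RtInv in simp_all)
  also have "\<dots> \<frown> Rt (rep q (ev q x)) y" by (rule ERtL) (use RtInv in simp_all)
  also have "\<dots> \<frown> rep q (opM q (ev q x) (ev q y))" using P_all[of y] RtInv ex by (simp add: Pq_def)
  finally show ?case by simp
qed

end


definition ee :: "nat \<Rightarrow> arc qterm set \<Rightarrow> mel" where
  "ee q U = ev q (SOME t. t \<in> U)"

definition cc :: "nat \<Rightarrow> mel \<Rightarrow> arc qterm set" where
  "cc q m = qclass (TA_gens q) (RR q) (rep q m)"

context
  fixes q :: nat
  assumes q2: "q > 2"
begin

lemma carrier_eq: "Q2_TA_carrier q = qclass (TA_gens q) (RR q) ` qterms (TA_gens q)"
  by (simp add: Q2_TA_carrier_def pres_carrier_def RR_def)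

lemma op_def': "Q2_TA_op q = pres_op (TA_gens q) (RR q)"
  by (simp add: Q2_TA_op_def RR_def)

lemma class_eq: "qcong (TA_gens q) (RR q) s t \<Longrightarrow> qclass (TA_gens q) (RR q) s = qclass (TA_gens q) (RR q) t"
  unfolding qclass_def by (auto intro: qcong.trans qcong.sym)

lemma in_class: "t \<in> qterms (TA_gens q) \<Longrightarrow> t \<in> qclass (TA_gens q) (RR q) t"
  unfolding qclass_def by (simp add: qcong.refl)

lemma some_class:
  assumes "t \<in> qterms (TA_gens q)"
  shows "qcong (TA_gens q) (RR q) t (SOME s. s \<in> qclass (TA_gens q) (RR q) t)"
proof -
  have "(SOME s. s \<in> qclass (TA_gens q) (RR q) t) \<in> qclass (TA_gens q) (RR q) t"
    using in_class[OF assms] by (rule someI)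
  then show ?thesis by (simp add: qclass_def)
qed

lemma ee_class: "t \<in> qterms (TA_gens q) \<Longrightarrow> ee q (qclass (TA_gens q) (RR q) t) = ev q t"
  unfolding ee_def using some_class ev_sound[OF q2] by metis

lemma main_iso:
  "Inn_group (Q2_TA_carrier q) (Q2_TA_op q) \<cong> dihedral_group (2 * q div gcd 2 q)
   \<and> Trans_group (Q2_TA_carrier q) (Q2_TA_op q) \<cong> dihedral_group q"
proof (rule iso_all[where e = "ee q" and c = "cc q"])
  show "q > 2" by (rule q2)
  show "ee q U \<in> Mset q" if "U \<in> Q2_TA_carrier q" for U
    using that q2 by (auto simp: carrier_eq ee_class intro!: ev_Mset)
  show "cc q m \<in> Q2_TA_carrier q" if "m \<in> Mset q" for m
    using that by (auto simp: carrier_eq cc_def intro!: imageI rep_terms[OF q2])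
  show "cc q (ee q U) = U" if U: "U \<in> Q2_TA_carrier q" for U
  proof -
    obtain t where t: "t \<in> qterms (TA_gens q)" "U = qclass (TA_gens q) (RR q) t"
      using U by (auto simp: carrier_eq)
    have "cc q (ee q U) = qclass (TA_gens q) (RR q) (rep q (ev q t))"
      using t by (simp add: cc_def ee_class)
    also have "\<dots> = U" using t class_eq[OF complete[OF q2 t(1)]] by simp
    finally show ?thesis .
  qed
  show "ee q (cc q m) = m" if "m \<in> Mset q" for m
    using that by (simp add: cc_def ee_class rep_terms[OF q2] ev_rep[OF q2])
  show "Q2_TA_op q U V = cc q (opM q (ee q U) (ee q V))"
    if UV: "U \<in> Q2_TA_carrier q" "V \<in> Q2_TA_carrier q" for U V
  proof -
    obtain s where s: "s \<in> qterms (TA_gens q)" "U = qclass (TA_gens q) (RR q) s"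
      using UV by (auto simp: carrier_eq)
    obtain t where t: "t \<in> qterms (TA_gens q)" "V = qclass (TA_gens q) (RR q) t"
      using UV by (auto simp: carrier_eq)
    define s' where "s' = (SOME x. x \<in> U)"
    define t' where "t' = (SOME x. x \<in> V)"
    have s': "s' \<in> qterms (TA_gens q)" using some_class[OF s(1)] qcong_terms s s'_def by metis
    have t': "t' \<in> qterms (TA_gens q)" using some_class[OF t(1)] qcong_terms t t'_def by metis
    have "Q2_TA_op q U V = qclass (TA_gens q) (RR q) (Rt s' t')"
      by (simp add: op_def' pres_op_def s'_def t'_def)
    also have "\<dots> = qclass (TA_gens q) (RR q) (rep q (ev q (Rt s' t')))"
      using class_eq[OF complete[OF q2]] s' t' by simp
    also have "\<dots> = cc q (opM q (ee q U) (ee q V))"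
      by (simp add: cc_def ee_def s'_def t'_def)
    finally show ?thesis .
  qed
qed

end


theorem mainTheorem4:
  fixes q :: nat
  assumes "q > 2"
  shows "Inn_group (Q2_TA_carrier q) (Q2_TA_op q) \<cong> dihedral_group (2 * q div gcd 2 q)
       \<and> Trans_group (Q2_TA_carrier q) (Q2_TA_op q) \<cong> dihedral_group q"
  using main_iso[OF assms] .


end
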